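(* If $L$ is a flat layout, then $\mathrm{coal}^\flat(L)$ is the unique flat layout of minimal rank whose layout function equals $\Phi_L$.
   Context: A flat layout $L=(s_1,\dots,s_m):(d_1,\dots,d_m)$ consists of a tuple of positive integers and a tuple of nonnegative integers of the same length $m=\mathrm{rank}(L)$; its modes are $s_i:d_i$. Its layout function $\Phi_L:[0,s_1\cdots s_m)\to\mathbb{Z}$ is $\Phi_L(x)=\sum_i x_id_i$ with $x_i=\lfloor x/(s_1\cdots s_{i-1})\rfloor\bmod s_i$. $\mathrm{squeeze}(L)$ removes all modes with $s_i=1$; $\mathrm{coal}^\flat(L)$ is obtained from $\mathrm{squeeze}(L)$ by repeatedly replacing adjacent modes $s_i,s_{i+1}:d_i,d_{i+1}$ with $d_{i+1}=s_id_i$ by the single mode $s_is_{i+1}:d_i$ until no such pair remains. *)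

theory Defs
  imports Main
begin

text \<open>A flat layout is a list of modes (s_i, d_i): shape s_i (positive) and stride d_i (nonnegative).\<close>
type_synonym layout = "(nat \<times> nat) list"

definition flat_layout :: "layout \<Rightarrow> bool" where
  "flat_layout L \<longleftrightarrow> (\<forall>m \<in> set L. fst m > 0)"

definition rank :: "layout \<Rightarrow> nat" where
  "rank L = length L"

definition lsize :: "layout \<Rightarrow> nat" where
  "lsize L = prod_list (map fst L)"

definition layout_coord :: "layout \<Rightarrow> nat \<Rightarrow> nat \<Rightarrow> nat" where
  "layout_coord L x i = (x div prod_list (map fst (take i L))) mod fst (L ! i)"

definition Phi_val :: "layout \<Rightarrow> nat \<Rightarrow> int" where
  "Phi_val L x = (\<Sum>i<length L. int (layout_coord L x i) * int (snd (L ! i)))"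

definition Phi :: "layout \<Rightarrow> nat \<Rightarrow> int option" where
  "Phi L = (\<lambda>x. if x < lsize L then Some (Phi_val L x) else None)"

definition squeeze :: "layout \<Rightarrow> layout" where
  "squeeze L = filter (\<lambda>m. fst m \<noteq> 1) L"

definition coal_step :: "(layout \<times> layout) set" where
  "coal_step = {(xs @ [(s1, d1), (s2, d2)] @ ys, xs @ [(s1 * s2, d1)] @ ys) | xs ys s1 d1 s2 d2.
                 d2 = s1 * d1}"

definition is_coal_flat :: "layout \<Rightarrow> layout \<Rightarrow> bool" where
  "is_coal_flat L M \<longleftrightarrow> (squeeze L, M) \<in> coal_step\<^sup>* \<and> (\<nexists>N. (M, N) \<in> coal_step)"

end

theory Submission
  imports Defs
begin

fun phi :: "layout \<Rightarrow> nat \<Rightarrow> int" where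
  "phi [] x = 0"
| "phi ((s,d)#L) x = int (x mod s * d) + phi L (x div s)"

lemma layout_coord_Cons_Suc:
  "layout_coord ((s,d)#L) x (Suc i) = layout_coord L (x div s) i"
  by (simp add: layout_coord_def div_mult2_eq)

lemma Phi_val_phi: "Phi_val L x = phi L x"
proof (induction L arbitrary: x)
  case Nil
  then show ?case by (simp add: Phi_val_def)
next
  case (Cons m L)
  obtain s d where m: "m = (s,d)" by force
  have "Phi_val (m#L) x = (\<Sum>i<Suc (length L). int (layout_coord (m#L) x i) * int (snd ((m#L) ! i)))"
    by (simp add: Phi_val_def)
  also have "\<dots> = int (layout_coord (m#L) x 0) * int (snd m) +
       (\<Sum>i<length L. int (layout_coord (m#L) x (Suc i)) * int (snd ((m#L) ! Suc i)))"
    by (subst sum.lessThan_Suc_shift) simp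
  also have "\<dots> = int (x mod s * d) + Phi_val L (x div s)"
    by (simp add: m layout_coord_Cons_Suc Phi_val_def layout_coord_def div_mult2_eq)
  finally show ?case using Cons m by simp
qed

lemma phi_0[simp]: "phi L 0 = 0"
  by (induction L) auto

lemma Phi_eq_iff: "Phi A = Phi B \<longleftrightarrow> lsize A = lsize B \<and> (\<forall>x<lsize A. phi A x = phi B x)"
proof
  assume h: "Phi A = Phi B"
  have "lsize A = lsize B"
  proof (rule ccontr)
    assume "lsize A \<noteq> lsize B"
    then consider "lsize A < lsize B" | "lsize B < lsize A" by linarith
    then show False
    proof cases
      case 1 then show ?thesis using fun_cong[OF h, of "lsize A"] by (simp add: Phi_def)
    next
      case 2 then show ?thesis using fun_cong[OF h, of "lsize B"] by (simp add: Phi_def)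
    qed
  qed
  moreover have "\<forall>x<lsize A. phi A x = phi B x"
    using h \<open>lsize A = lsize B\<close> by (auto simp: Phi_def Phi_val_phi fun_eq_iff split: if_splits)
  ultimately show "lsize A = lsize B \<and> (\<forall>x<lsize A. phi A x = phi B x)" by blast
next
  assume "lsize A = lsize B \<and> (\<forall>x<lsize A. phi A x = phi B x)"
  then show "Phi A = Phi B" by (auto simp: Phi_def Phi_val_phi fun_eq_iff)
qed

lemma lsize_Cons[simp]: "lsize ((s,d)#L) = s * lsize L"
  by (simp add: lsize_def)

lemma lsize_Nil[simp]: "lsize [] = 1"
  by (simp add: lsize_def)

lemma lsize_pos: "\<forall>m\<in>set L. fst m > 0 \<Longrightarrow> lsize L > 0"
  by (induction L) auto

lemma mult_gt1: "Suc 0 < a \<Longrightarrow> Suc 0 < b \<Longrightarrow> Suc 0 < (a::nat)*b"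
  by (metis One_nat_def less_1_mult)

fun nc :: "layout \<Rightarrow> bool" where
  "nc ((s1,d1)#(s2,d2)#L) = (d2 \<noteq> s1*d1 \<and> nc ((s2,d2)#L))"
| "nc _ = True"

lemma nc_tail: "nc (m#L) \<Longrightarrow> nc L"
  by (cases m; cases L) auto

lemma step_Cons: "(A,B) \<in> coal_step \<Longrightarrow> (m#A, m#B) \<in> coal_step"
  unfolding coal_step_def
  apply clarify
  subgoal for xs ys s1 d1 s2
    by (rule exI[of _ "m#xs"]) auto
  done

lemma nostep_nc: "\<not>(\<exists>N. (M,N) \<in> coal_step) \<Longrightarrow> nc M"
proof (induction M rule: nc.induct)
  case (1 s1 d1 s2 d2 L)
  have a: "d2 \<noteq> s1*d1"
  proof
    assume "d2 = s1*d1"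
    then have "((s1,d1)#(s2,d2)#L, (s1*s2,d1)#L) \<in> coal_step"
      unfolding coal_step_def by force
    then show False using 1 by blast
  qed
  have "\<not>(\<exists>N. ((s2,d2)#L,N) \<in> coal_step)"
    using 1(2) step_Cons by blast
  then show ?case using a 1 by simp
qed auto

lemma step_len: "(A,B) \<in> coal_step \<Longrightarrow> length B < length A"
  unfolding coal_step_def by auto

lemma step_len_star: "(A,B) \<in> coal_step\<^sup>* \<Longrightarrow> A = B \<or> length B < length A"
  by (induction rule: rtrancl_induct) (auto dest: step_len)

lemma step_phi: "(A,B) \<in> coal_step \<Longrightarrow> lsize A = lsize B \<and> phi A x = phi B x"
proof -
  assume "(A,B) \<in> coal_step"
  then obtain xs ys s1 d1 s2 where A: "A = xs @ [(s1, d1), (s2, s1*d1)] @ ys"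
    and B: "B = xs @ [(s1 * s2, d1)] @ ys"
    unfolding coal_step_def by blast
  have "lsize A = lsize B" unfolding A B lsize_def by simp
  moreover have "phi (xs @ [(s1, d1), (s2, s1*d1)] @ ys) x = phi (xs @ [(s1 * s2, d1)] @ ys) x"
  proof (induction xs arbitrary: x)
    case Nil
    have "int (x mod (s1 * s2) * d1) = int (x mod s1 * d1) + int (x div s1 mod s2 * (s1 * d1))"
      by (simp add: mod_mult2_eq algebra_simps)
    then show ?case by (simp add: div_mult2_eq)
  next
    case (Cons m xs)
    then show ?case by (cases m) simp
  qed
  ultimately show ?thesis using A B by simp
qed

lemma star_props: "(A,B) \<in> coal_step\<^sup>* \<Longrightarrow> lsize A = lsize B \<and> (\<forall>x. phi A x = phi B x)
   \<and> ((\<forall>m\<in>set A. fst m > 1) \<longrightarrow> (\<forall>m\<in>set B. fst m > 1))"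
proof (induction rule: rtrancl_induct)
  case base then show ?case by simp
next
  case (step y z)
  from step(2) obtain xs ys s1 d1 s2 where A: "y = xs @ [(s1, d1), (s2, s1*d1)] @ ys"
    and B: "z = xs @ [(s1 * s2, d1)] @ ys"
    unfolding coal_step_def by blast
  have "(\<forall>m\<in>set y. fst m > 1) \<longrightarrow> (\<forall>m\<in>set z. fst m > 1)"
    unfolding A B by (auto simp: mult_gt1)
  then show ?case using step step_phi[OF step(2)] by auto
qed

lemma squeeze_phi: "lsize (squeeze L) = lsize L \<and> phi (squeeze L) x = phi L x"
proof (induction L arbitrary: x)
  case Nil then show ?case by (simp add: squeeze_def)
next
  case (Cons m L)
  then show ?case by (cases m) (auto simp: squeeze_def)
qed

lemma nf_exists: "\<exists>M. (K,M) \<in> coal_step\<^sup>* \<and> \<not>(\<exists>N. (M,N) \<in> coal_step)"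
proof (induction K rule: measure_induct_rule[where f=length])
  case (less K)
  show ?case
  proof (cases "\<exists>N. (K,N) \<in> coal_step")
    case True
    then obtain N where N: "(K,N) \<in> coal_step" by blast
    from less[OF step_len[OF N]] obtain M where "(N,M) \<in> coal_step\<^sup>*" "\<not>(\<exists>N. (M,N) \<in> coal_step)"
      by blast
    then show ?thesis using N by (meson converse_rtrancl_into_rtrancl)
  next
    case False then show ?thesis by blast
  qed
qed

lemma uniq_aux:
  assumes "1 < s" "s < t" "\<forall>m\<in>set M'. fst m > 1" "\<forall>m\<in>set N'. fst m > 1"
    "nc ((s,d)#M')" "lsize ((s,d)#M') = lsize ((t,d)#N')"
    "\<forall>x<lsize ((s,d)#M'). phi ((s,d)#M') x = phi ((t,d)#N') x"
  shows False
proof -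
  have "lsize N' > 0" using lsize_pos assms(4) by force
  then have "t \<le> t * lsize N'" by simp
  then have lt: "s < s * lsize M'" using assms(2,6) by (simp add: less_le_trans)
  then have "lsize M' > 1" by simp
  then obtain s' d' M'' where M': "M' = (s',d')#M''"
    by (cases M') auto
  have "s' > 1" using assms(3) M' by auto
  have "phi ((s,d)#M') s = phi ((t,d)#N') s" using assms(7) lt by (simp only: lsize_Cons)
  then have "int d' = int (s*d)" using M' \<open>s' > 1\<close> assms(1,2) by simp
  then have "d' = s*d" by (simp only: of_nat_eq_iff)
  then show False using assms(5) M' by simp
qed

lemma uniq:
  "\<forall>m\<in>set M. fst m > 1 \<Longrightarrow> nc M \<Longrightarrow> \<forall>m\<in>set N. fst m > 1 \<Longrightarrow> nc N \<Longrightarrow>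
   lsize M = lsize N \<Longrightarrow> \<forall>x<lsize M. phi M x = phi N x \<Longrightarrow> M = N"
proof (induction M arbitrary: N)
  case Nil
  show ?case
  proof (cases N)
    case (Cons n N')
    obtain t e where n: "n = (t,e)" by force
    have "lsize N' > 0" using lsize_pos Cons Nil(3) by force
    then have "t \<le> t * lsize N'" by simp
    then show ?thesis using Nil Cons n by auto
  qed simp
next
  case (Cons m M')
  obtain s d where m: "m = (s,d)" by force
  have s1: "s > 1" using Cons m by auto
  have "lsize M' > 0" using lsize_pos Cons by force
  then have "s \<le> s * lsize M'" by simp
  then have "s \<le> lsize N" using Cons(6) m s1 by (metis lsize_Cons)
  then have "lsize N > 1" using s1 by linarith
  then obtain t e N' where N: "N = (t,e)#N'" by (cases N) auto
  have t1: "t > 1" using Cons N by auto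
  have "phi (m#M') 1 = phi N 1" using Cons(7) \<open>lsize N > 1\<close> Cons(6) by simp
  then have de: "d = e" using s1 t1 m N by simp
  have st: "s = t"
  proof (rule ccontr)
    assume "s \<noteq> t"
    then consider "s < t" | "t < s" by linarith
    then show False
    proof cases
      case 1 then show ?thesis
        using uniq_aux[of s t M' N' d] s1 Cons.prems m N de by auto
    next
      case 2 then show ?thesis
        using uniq_aux[of t s N' M' d] t1 Cons.prems m N de by (auto simp: nc_tail)
    qed
  qed
  have ls: "lsize M' = lsize N'" using Cons(6) m N st s1 by simp
  have "\<forall>y<lsize M'. phi M' y = phi N' y"
  proof (intro allI impI)
    fix y assume "y < lsize M'"
    then have "s*y < lsize (m#M')" using m s1 by simp
    then have "phi (m#M') (s*y) = phi N (s*y)" using Cons(7) by blast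
    then show "phi M' y = phi N' y" using m N st s1 de by simp
  qed
  then have "M' = N'" using Cons.IH[of N'] Cons.prems N ls by (auto dest: nc_tail)
  then show ?case using m N st de by simp
qed

theorem mainTheorem11:
  assumes "flat_layout L"
  shows "(\<exists>M. is_coal_flat L M) \<and>
         (\<forall>M. is_coal_flat L M \<longrightarrow>
            flat_layout M \<and> Phi M = Phi L \<and>
            (\<forall>N. flat_layout N \<and> Phi N = Phi L \<longrightarrow> rank M \<le> rank N) \<and>
            (\<forall>N. flat_layout N \<and> Phi N = Phi L \<and> rank N = rank M \<longrightarrow> N = M))"
proof -
  have nf: "\<And>K. \<forall>m\<in>set K. fst m > 0 \<Longrightarrow> \<exists>M. (squeeze K, M) \<in> coal_step\<^sup>* \<and> \<not>(\<exists>N. (M,N) \<in> coal_step)"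
    using nf_exists by blast
  have sq1: "\<And>K. \<forall>m\<in>set K. fst m > 0 \<Longrightarrow> \<forall>m\<in>set (squeeze K). fst m > 1"
    by (auto simp: squeeze_def)
  have good: "\<And>K M. \<forall>m\<in>set K. fst m > 0 \<Longrightarrow> (squeeze K, M) \<in> coal_step\<^sup>* \<Longrightarrow>
      (\<forall>m\<in>set M. fst m > 1) \<and> Phi M = Phi K"
  proof -
    fix K M assume a: "\<forall>m\<in>set K. fst m > 0" "(squeeze K, M) \<in> coal_step\<^sup>*"
    from star_props[OF a(2)] sq1[OF a(1)] squeeze_phi[of K]
    show "(\<forall>m\<in>set M. fst m > 1) \<and> Phi M = Phi K"
      by (auto simp: Phi_eq_iff)
  qed
  have L0: "\<forall>m\<in>set L. fst m > 0" using assms by (simp add: flat_layout_def)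
  show ?thesis
  proof (intro conjI allI impI)
    show "\<exists>M. is_coal_flat L M" using nf[OF L0] by (auto simp: is_coal_flat_def)
  next
    fix M assume M: "is_coal_flat L M"
    then have Ms: "(squeeze L, M) \<in> coal_step\<^sup>*" and Mn: "nc M"
      by (auto simp: is_coal_flat_def intro: nostep_nc)
    have M1: "\<forall>m\<in>set M. fst m > 1" and MP: "Phi M = Phi L" using good[OF L0 Ms] by auto
    show "flat_layout M" using M1 by (auto simp: flat_layout_def)
    show "Phi M = Phi L" by fact
    have key: "\<And>N. flat_layout N \<Longrightarrow> Phi N = Phi L \<Longrightarrow> length M \<le> length N \<and> (length M = length N \<longrightarrow> N = M)"
    proof -
      fix N assume N: "flat_layout N" "Phi N = Phi L"
      then have N0: "\<forall>m\<in>set N. fst m > 0" by (simp add: flat_layout_def)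
      obtain K where K: "(squeeze N, K) \<in> coal_step\<^sup>*" "\<not>(\<exists>N'. (K,N') \<in> coal_step)"
        using nf[OF N0] by blast
      have K1: "\<forall>m\<in>set K. fst m > 1" and KP: "Phi K = Phi N" using good[OF N0 K(1)] by auto
      have "Phi M = Phi K" using MP KP N by simp
      then have MK: "M = K" using uniq[OF M1 Mn K1 nostep_nc[OF K(2)]] by (simp add: Phi_eq_iff)
      have l1: "length (squeeze N) \<le> length N" by (simp add: squeeze_def)
      have l2: "length K \<le> length (squeeze N)" using step_len_star[OF K(1)] by auto
      show "length M \<le> length N \<and> (length M = length N \<longrightarrow> N = M)"
      proof (intro conjI impI)
        show "length M \<le> length N" using MK l1 l2 by simp
        assume e: "length M = length N"
        then have "length (squeeze N) = length N" using MK l1 l2 by simp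
        then have "squeeze N = N" unfolding squeeze_def
          by (metis (no_types, lifting) filter_True length_filter_less less_irrefl)
        moreover have "squeeze N = K" using step_len_star[OF K(1)] e MK l1 l2 by auto
        ultimately show "N = M" using MK by simp
      qed
    qed
    {
      fix N assume "flat_layout N \<and> Phi N = Phi L"
      then show "rank M \<le> rank N" using key by (auto simp: rank_def)
    }
    fix N assume "flat_layout N \<and> Phi N = Phi L \<and> rank N = rank M"
    then show "N = M" using key by (auto simp: rank_def)
  qed
qed

end
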